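(* Let $\nu$ be a multiplicative function on $\mathbb{F}_q[T]$ such that for some non-negative integer $r$ we have $\nu(P^k)=O(k^r)$ for all primes $P$ and $k\ge1$ (implied constant independent of $P$), and such that for some $\eta>0$, $\nu(A)\ll_\eta|A|^\eta$ as $\deg A\to\infty$. Let $R\in\mathcal{M}$ be a variable, $a,b>0$ constants, and $X=X(R)$, $y=y(R)$ non-negative, increasing, integer-valued functions with $X\le a\log_q\log\deg R$ and $y\ge b\log_q\deg R$ for $\deg R$ large. Let $c,\epsilon$ satisfy $c>\epsilon>\max\{0,1-\frac1a\}$ and $c>\eta$, let $\delta>0$ be small, and let $S\in\mathcal{M}$ (possibly depending on $R$). Then, as $\deg R\to\infty$, $$\sum_{\substack{A\in\mathcal{S}_{\mathcal{M}}(X)\\ \deg A\le y\\ (A,S)=1}}\frac{\nu(A)}{|A|^c} = \prod_{\substack{\deg P\le X\\ (P,S)=1}}\Big(1+\frac{\nu(P)}{|P|^c}+\frac{\nu(P^2)}{|P|^{2c}}+\cdots\Big) + O_{q,a,b,c,r,\epsilon,\delta}\Big((\deg R)^{-b(c-\epsilon)(1-\delta)}\Big).$$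
   Context: $q$ prime power, $\mathcal{M}$ the monic polynomials of $\mathbb{F}_q[T]$, $P$ denotes monic irreducibles, $|A|=q^{\deg A}$, $\mathcal{S}_{\mathcal{M}}(X)=\{A\in\mathcal{M}: P\mid A\Rightarrow\deg P\le X\}$. *)

theory Defs
  imports "HOL-Analysis.Analysis" "HOL-Computational_Algebra.Polynomial_Factorial"
begin

definition monic_poly :: "'a::field poly \<Rightarrow> bool" where
  "monic_poly A \<longleftrightarrow> lead_coeff A = 1"

definition monic_irred :: "'a::field poly \<Rightarrow> bool" where
  "monic_irred P \<longleftrightarrow> monic_poly P \<and> irreducible P"

definition absq :: "'a::{finite,field} poly \<Rightarrow> real" where
  "absq A = real CARD('a) ^ degree A"

definition smooth_monic :: "nat \<Rightarrow> 'a::field poly \<Rightarrow> bool" where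
  "smooth_monic X A \<longleftrightarrow> monic_poly A \<and>
     (\<forall>P. monic_irred P \<and> P dvd A \<longrightarrow> degree P \<le> X)"

definition multiplicative_poly :: "('a::field poly \<Rightarrow> complex) \<Rightarrow> bool" where
  "multiplicative_poly \<nu> \<longleftrightarrow> \<nu> 1 = 1 \<and>
     (\<forall>A B. monic_poly A \<longrightarrow> monic_poly B \<longrightarrow> coprime A B \<longrightarrow> \<nu> (A * B) = \<nu> A * \<nu> B)"

end

theory Submission
  imports Defs "HOL-Real_Asymp.Real_Asymp"
begin



lemma monic_irred_prime_elem:
  fixes P :: "'a::field poly"
  shows "monic_irred P \<Longrightarrow> prime_elem P"
  by (simp add: monic_irred_def field_poly_irreducible_imp_prime)

lemma monic_irred_nz: "monic_irred (P::'a::field poly) \<Longrightarrow> P \<noteq> 0"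
  by (auto simp: monic_irred_def)

lemma monic_irred_deg: "monic_irred (P::'a::field poly) \<Longrightarrow> degree P > 0"
  by (metis gr0I irreducible_not_unit is_unit_iff_degree monic_irred_def monic_irred_nz)

lemma monic_irred_dvd_eq:
  fixes P R :: "'a::field poly"
  assumes P: "monic_irred P" and R: "monic_irred R" and d: "R dvd P"
  shows "R = P"
proof -
  obtain m where m: "P = R * m" using d by (auto elim: dvdE)
  have "irreducible P" using P by (simp add: monic_irred_def)
  then have "R dvd 1 \<or> m dvd 1" using m by (rule irreducibleD)
  moreover have "\<not> R dvd 1" using R by (simp add: monic_irred_def irreducible_not_unit)
  ultimately have u: "m dvd 1" by blast
  have "m \<noteq> 0" using u by auto
  then have "degree m = 0" using u is_unit_iff_degree by blast
  then obtain k where k: "m = [:k:]" by (metis degree_0_id)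
  have "lead_coeff P = lead_coeff R * k" using m k by (simp add: lead_coeff_mult)
  then have "k = 1" using P R by (simp add: monic_irred_def monic_poly_def)
  then show ?thesis using m k by simp
qed

lemma exists_monic_irred_dvd:
  fixes A :: "'a::field poly"
  shows "degree A > 0 \<Longrightarrow> \<exists>P. monic_irred P \<and> P dvd A"
proof (induction "degree A" arbitrary: A rule: less_induct)
  case less
  have A0: "A \<noteq> 0" using less.prems by auto
  have nu: "\<not> A dvd 1" using less.prems by (simp add: is_unit_iff_degree A0)
  show ?case
  proof (cases "irreducible A")
    case True
    let ?P = "smult (inverse (lead_coeff A)) A"
    have lc: "lead_coeff A \<noteq> 0" using A0 by simp
    have eq: "?P = [:inverse (lead_coeff A):] * A" by simp
    have un: "is_unit [:inverse (lead_coeff A):]" using lc by (simp add: is_unit_pCons_iff)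
    have "irreducible ?P" unfolding eq using True irreducible_mult_unit_left[OF un] by blast
    moreover have "lead_coeff ?P = 1" using lc by simp
    moreover have "?P dvd A"
    proof
      show "A = ?P * [:lead_coeff A:]" using lc by (simp add: smult_smult)
    qed
    ultimately have "monic_irred ?P \<and> ?P dvd A" by (simp add: monic_irred_def monic_poly_def)
    then show ?thesis by blast
  next
    case False
    then obtain x y where xy: "A = x * y" "\<not> x dvd 1" "\<not> y dvd 1"
      using A0 nu unfolding irreducible_def by blast
    have x0: "x \<noteq> 0" "y \<noteq> 0" using xy A0 by auto
    have "degree A = degree x + degree y" using xy x0 by (simp add: degree_mult_eq)
    moreover have "degree x > 0" "degree y > 0" using xy x0 by (auto simp: is_unit_iff_degree)
    ultimately have "degree x < degree A" "degree x > 0" by auto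
    then obtain P where "monic_irred P" "P dvd x" using less.hyps by blast
    then show ?thesis using xy by auto
  qed
qed

lemma coprime_iff_monic_irred:
  fixes A S :: "'a::field poly"
  assumes "A \<noteq> 0"
  shows "coprime A S \<longleftrightarrow> (\<forall>P. monic_irred P \<and> P dvd A \<longrightarrow> \<not> P dvd S)"
proof
  assume c: "coprime A S"
  show "\<forall>P. monic_irred P \<and> P dvd A \<longrightarrow> \<not> P dvd S"
  proof (intro allI impI notI)
    fix P assume "monic_irred P \<and> P dvd A" "P dvd S"
    then have "is_unit P" using c coprime_common_divisor by blast
    then show False using \<open>monic_irred P \<and> P dvd A\<close> by (simp add: monic_irred_def irreducible_not_unit)
  qed
next
  assume h: "\<forall>P. monic_irred P \<and> P dvd A \<longrightarrow> \<not> P dvd S"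
  show "coprime A S"
  proof (rule coprimeI)
    fix d assume d: "d dvd A" "d dvd S"
    show "is_unit d"
    proof (rule ccontr)
      assume "\<not> is_unit d"
      moreover have "d \<noteq> 0" using d assms by auto
      ultimately have "degree d > 0" by (simp add: is_unit_iff_degree)
      then obtain P where "monic_irred P" "P dvd d" using exists_monic_irred_dvd by blast
      then show False using h d by (meson dvd_trans)
    qed
  qed
qed

definition pp :: "'a::field poly set \<Rightarrow> ('a poly \<Rightarrow> nat) \<Rightarrow> 'a poly" where
  "pp Q e = (\<Prod>P\<in>Q. P ^ e P)"

lemma pp_dvd:
  fixes R :: "'a::field poly"
  assumes "finite Q" "\<And>P. P \<in> Q \<Longrightarrow> monic_irred P" "monic_irred R" "R dvd pp Q e"
  shows "R \<in> Q"
  using assms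
proof (induction Q rule: finite_induct)
  case empty
  then show ?case by (auto simp: pp_def monic_irred_def irreducible_not_unit)
next
  case (insert P Q)
  have pe: "prime_elem R" using insert.prems monic_irred_prime_elem by blast
  have "pp (insert P Q) e = P ^ e P * pp Q e" using insert.hyps by (simp add: pp_def)
  then have "R dvd P ^ e P \<or> R dvd pp Q e" using insert.prems pe by (simp add: prime_elem_dvd_mult_iff)
  then show ?case
  proof
    assume "R dvd P ^ e P"
    then have "R dvd P" using pe prime_elem_dvd_power by blast
    then show ?thesis using monic_irred_dvd_eq insert.prems by blast
  qed (use insert in auto)
qed

lemma pp_monic:
  assumes "finite Q" "\<And>P. P \<in> Q \<Longrightarrow> monic_irred (P::'a::field poly)"
  shows "monic_poly (pp Q e)"
  using assms by (auto simp: pp_def monic_poly_def lead_coeff_prod lead_coeff_power monic_irred_def)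

lemma pp_nz:
  assumes "finite Q" "\<And>P. P \<in> Q \<Longrightarrow> monic_irred (P::'a::field poly)"
  shows "pp Q e \<noteq> 0"
  using pp_monic[OF assms, of e] unfolding monic_poly_def by auto

lemma pp_degree:
  assumes "finite Q" "\<And>P. P \<in> Q \<Longrightarrow> monic_irred (P::'a::field poly)"
  shows "degree (pp Q e) = (\<Sum>P\<in>Q. e P * degree P)"
  unfolding pp_def using assms
  by (subst degree_prod_eq_sum_degree) (auto simp: degree_power_eq monic_irred_nz)

lemma pp_insert:
  assumes "finite Q" "P \<notin> Q"
  shows "pp (insert P Q) e = P ^ e P * pp Q e"
  using assms by (simp add: pp_def)

lemma pp_pow_dvd:
  fixes P :: "'a::field poly"
  assumes "finite Q" "\<And>P. P \<in> Q \<Longrightarrow> monic_irred P" "P \<in> Q" "P ^ k dvd pp Q e"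
  shows "k \<le> e P"
proof (rule ccontr)
  assume "\<not> k \<le> e P"
  then have "P ^ Suc (e P) dvd P ^ k" by (intro le_imp_power_dvd) simp
  then have d: "P ^ Suc (e P) dvd pp Q e" using assms(4) dvd_trans by blast
  have eq: "pp Q e = P ^ e P * pp (Q - {P}) e"
    using assms(1,3) pp_insert[of "Q - {P}" P e] by (simp add: insert_absorb)
  have "P ^ e P * P dvd P ^ e P * pp (Q - {P}) e" using d eq by (simp add: mult.commute)
  then have "P dvd pp (Q - {P}) e" using monic_irred_nz[OF assms(2)[OF assms(3)]]
    by (simp add: dvd_mult_cancel_left)
  then have "P \<in> Q - {P}" using assms by (intro pp_dvd) auto
  then show False by simp
qed

lemma pp_inj:
  fixes Q :: "'a::field poly set"
  assumes "finite Q" "\<And>P. P \<in> Q \<Longrightarrow> monic_irred P"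
  shows "inj_on (pp Q) (PiE Q (\<lambda>_. UNIV))"
proof (rule inj_onI)
  fix e e' assume e: "e \<in> PiE Q (\<lambda>_. UNIV)" "e' \<in> PiE Q (\<lambda>_. UNIV)" and eq: "pp Q e = pp Q e'"
  show "e = e'"
  proof (rule PiE_ext[OF e])
    fix P assume P: "P \<in> Q"
    have "P ^ e P dvd pp Q e" unfolding pp_def by (rule dvd_prodI[OF assms(1) P])
    then have "P ^ e P dvd pp Q e'" using eq by simp
    then have "e P \<le> e' P" using pp_pow_dvd assms P by blast
    moreover have "P ^ e' P dvd pp Q e'" unfolding pp_def by (rule dvd_prodI[OF assms(1) P])
    then have "P ^ e' P dvd pp Q e" using eq by simp
    then have "e' P \<le> e P" using pp_pow_dvd assms P by blast
    ultimately show "e P = e' P" by simp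
  qed
qed

lemma pp_mult:
  fixes \<nu> :: "'a::field poly \<Rightarrow> complex"
  assumes m: "multiplicative_poly \<nu>" and "finite Q" "\<And>P. P \<in> Q \<Longrightarrow> monic_irred P"
  shows "\<nu> (pp Q e) = (\<Prod>P\<in>Q. \<nu> (P ^ e P))"
  using assms(2,3)
proof (induction Q rule: finite_induct)
  case empty
  then show ?case using m by (simp add: pp_def multiplicative_poly_def)
next
  case (insert P Q)
  have P: "monic_irred P" using insert by auto
  have mP: "monic_poly (P ^ e P)" using P by (simp add: monic_poly_def monic_irred_def lead_coeff_power)
  have mQ: "monic_poly (pp Q e)" using insert by (intro pp_monic) auto
  have "coprime (P ^ e P) (pp Q e)"
  proof (subst coprime_iff_monic_irred)
    show "P ^ e P \<noteq> 0" using monic_irred_nz[OF P] by simp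
    show "\<forall>R. monic_irred R \<and> R dvd P ^ e P \<longrightarrow> \<not> R dvd pp Q e"
    proof (intro allI impI)
      fix R assume R: "monic_irred R \<and> R dvd P ^ e P"
      then have "R dvd P" using monic_irred_prime_elem prime_elem_dvd_power by blast
      then have "R = P" using R P monic_irred_dvd_eq by blast
      then show "\<not> R dvd pp Q e" using pp_dvd[of Q R e] insert R by auto
    qed
  qed
  then have "\<nu> (P ^ e P * pp Q e) = \<nu> (P ^ e P) * \<nu> (pp Q e)"
    using m mP mQ by (simp add: multiplicative_poly_def)
  then show ?case using insert by (simp add: pp_insert)
qed



lemma pp_surj:
  fixes A :: "'a::field poly"
  assumes "finite Q" "\<And>P. P \<in> Q \<Longrightarrow> monic_irred P"
  shows "monic_poly A \<Longrightarrow> (\<forall>P. monic_irred P \<and> P dvd A \<longrightarrow> P \<in> Q) \<Longrightarrow>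
         \<exists>e\<in>PiE Q (\<lambda>_. UNIV). A = pp Q e"
proof (induction "degree A" arbitrary: A rule: less_induct)
  case less
  show ?case
  proof (cases "degree A = 0")
    case True
    have "A = [:coeff A 0:]" using True by (simp add: degree_0_id)
    moreover have "coeff A 0 = 1" using True less.prems(1) by (simp add: monic_poly_def)
    ultimately have "A = 1" by (simp add: one_pCons)
    moreover have "pp Q (restrict (\<lambda>_. 0) Q) = 1" by (simp add: pp_def)
    moreover have "restrict (\<lambda>_. 0) Q \<in> PiE Q (\<lambda>_. UNIV)" by simp
    ultimately show ?thesis by (intro bexI[of _ "restrict (\<lambda>_. 0) Q"]) auto
  next
    case False
    then obtain P where P: "monic_irred P" "P dvd A" using exists_monic_irred_dvd by blast
    then have PQ: "P \<in> Q" using less.prems by blast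
    obtain B where B: "A = P * B" using P by (auto elim: dvdE)
    have P0: "P \<noteq> 0" using P monic_irred_nz by blast
    have A0: "A \<noteq> 0" using less.prems by (auto simp: monic_poly_def)
    then have B0: "B \<noteq> 0" using B by auto
    have "lead_coeff A = lead_coeff P * lead_coeff B" using B by (simp add: lead_coeff_mult)
    then have mB: "monic_poly B" using less.prems P by (simp add: monic_poly_def monic_irred_def)
    have "degree A = degree P + degree B" using B P0 B0 by (simp add: degree_mult_eq)
    then have dB: "degree B < degree A" using monic_irred_deg[OF P(1)] by simp
    have hB: "\<forall>R. monic_irred R \<and> R dvd B \<longrightarrow> R \<in> Q" using less.prems B by auto
    have "\<exists>e\<in>PiE Q (\<lambda>_. UNIV). B = pp Q e" by (rule less.hyps[OF dB mB hB])
    then obtain e where e: "e \<in> PiE Q (\<lambda>_. UNIV)" "B = pp Q e" by blast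
    let ?e = "e(P := Suc (e P))"
    have ee: "?e \<in> PiE Q (\<lambda>_. UNIV)" using e PQ by (auto simp: PiE_def extensional_def)
    have ppe: "pp Q ?e = P * pp Q e"
    proof -
      have "pp Q ?e = P ^ ?e P * pp (Q - {P}) ?e"
        using assms(1) PQ pp_insert[of "Q - {P}" P ?e] by (simp add: insert_absorb)
      also have "pp (Q - {P}) ?e = pp (Q - {P}) e" unfolding pp_def by (intro prod.cong) auto
      also have "P ^ ?e P * pp (Q - {P}) e = P * (P ^ e P * pp (Q - {P}) e)" by simp
      also have "P ^ e P * pp (Q - {P}) e = pp Q e"
        using assms(1) PQ pp_insert[of "Q - {P}" P e] by (simp add: insert_absorb)
      finally show ?thesis .
    qed
    have "A = pp Q ?e" by (simp only: ppe B e(2))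
    with ee show ?thesis by blast
  qed
qed





lemma card_ge2: "CARD('a::{finite,field}) \<ge> 2"
proof -
  have "card {0::'a, 1} = 2" by simp
  moreover have "card {0::'a, 1} \<le> CARD('a)" by (rule card_mono) auto
  ultimately show ?thesis by simp
qed

lemma absq_powr:
  "absq (A::'a::{finite,field} poly) powr t = real CARD('a) powr (real (degree A) * t)"
proof -
  have q: "real CARD('a) > 0" using card_ge2[where 'a='a] by simp
  have "absq A = real CARD('a) powr real (degree A)" unfolding absq_def using q by (simp add: powr_realpow)
  then show ?thesis by (simp add: powr_powr)
qed

lemma summable_pow_geom:
  assumes "0 \<le> z" "z < (1::real)"
  shows "summable (\<lambda>k. real k ^ r * z ^ k)"
proof (cases "z = 0")
  case True
  have "summable (\<lambda>k. real k ^ r * 0 ^ k)"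
    by (rule summable_finite[of "{0}"]) auto
  then show ?thesis using True by simp
next
  case False
  then have z: "0 < z" using assms by auto
  define w where "w = sqrt z"
  have w: "0 < w" "w < 1" using z assms(2) by (auto simp: w_def real_sqrt_lt_1_iff)
  have zw: "z = w * w" using z by (simp add: w_def)
  have "((\<lambda>k. real k ^ r * w ^ k) \<longlongrightarrow> 0) at_top"
    using w by real_asymp
  then have "eventually (\<lambda>k. real k ^ r * w ^ k < 1) at_top"
    by (rule order_tendstoD) simp
  then have ev: "eventually (\<lambda>k. norm (real k ^ r * z ^ k) \<le> sqrt z ^ k) at_top"
  proof eventually_elim
    case (elim k)
    have "norm (real k ^ r * z ^ k) = (real k ^ r * w ^ k) * w ^ k"
      using w by (simp add: zw power_mult_distrib)
    also have "\<dots> \<le> 1 * w ^ k" using elim w by (intro mult_right_mono) auto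
    finally show ?case by (simp add: w_def)
  qed
  have "summable (\<lambda>k. sqrt z ^ k)" using z assms(2) by (intro summable_geometric) (simp add: real_sqrt_lt_1_iff)
  then show ?thesis using ev by (rule summable_comparison_test_ev[rotated])
qed




lemma finite_deg_le:
  "finite {p::'a::{finite,zero} poly. degree p \<le> n}"
proof -
  have "inj_on (\<lambda>p. restrict (coeff p) {..n}) {p::'a poly. degree p \<le> n}"
  proof (rule inj_onI)
    fix p q :: "'a poly" assume a: "p \<in> {p. degree p \<le> n}" "q \<in> {p. degree p \<le> n}"
      "restrict (coeff p) {..n} = restrict (coeff q) {..n}"
    show "p = q"
    proof (rule poly_eqI)
      fix i
      show "coeff p i = coeff q i"
      proof (cases "i \<le> n")
        case True then show ?thesis using a(3) by (metis atMost_iff restrict_apply')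
      next
        case False
        then show ?thesis using a(1,2) by (auto simp: coeff_eq_0)
      qed
    qed
  qed
  moreover have "(\<lambda>p. restrict (coeff p) {..n}) ` {p::'a poly. degree p \<le> n} \<subseteq> PiE {..n} (\<lambda>_. UNIV)"
    by (intro image_subsetI) simp
  moreover have "finite (PiE {..n} (\<lambda>_. (UNIV::'a set)))" by (simp add: finite_PiE)
  ultimately show ?thesis by (meson finite_imageD finite_subset)
qed

lemma card_monic_deg:
  "card {p::'a::{finite,field} poly. monic_poly p \<and> degree p = n} \<le> CARD('a) ^ n"
proof -
  let ?M = "{p::'a poly. monic_poly p \<and> degree p = n}"
  have inj: "inj_on (\<lambda>p. restrict (coeff p) {..<n}) ?M"
  proof (rule inj_onI)
    fix p q :: "'a poly" assume a: "p \<in> ?M" "q \<in> ?M"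
      "restrict (coeff p) {..<n} = restrict (coeff q) {..<n}"
    show "p = q"
    proof (rule poly_eqI)
      fix i
      show "coeff p i = coeff q i"
      proof (cases "i < n")
        case True then show ?thesis using a(3) by (metis lessThan_iff restrict_apply')
      next
        case False
        then show ?thesis using a(1,2) by (cases "i = n") (auto simp: monic_poly_def coeff_eq_0)
      qed
    qed
  qed
  have sub: "(\<lambda>p. restrict (coeff p) {..<n}) ` ?M \<subseteq> PiE {..<n} (\<lambda>_. UNIV)"
    by (intro image_subsetI) simp
  have "card ?M = card ((\<lambda>p. restrict (coeff p) {..<n}) ` ?M)" using inj by (simp add: card_image)
  also have "\<dots> \<le> card (PiE {..<n} (\<lambda>_. (UNIV::'a set)))"
    by (rule card_mono[OF _ sub]) (simp add: finite_PiE)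
  also have "\<dots> = CARD('a) ^ n" by (simp add: card_PiE)
  finally show ?thesis .
qed

lemma asymp_aux:
  fixes D a q \<theta> \<kappa> :: real
  assumes "q > 1" "0 \<le> \<theta>" "\<theta> < 1" "\<kappa> > 0"
  shows "eventually (\<lambda>d::nat. D * (a * log q (ln (real d)) + 1) * ln (real d) powr \<theta> \<le> \<kappa> * ln (real d)) sequentially"
proof -
  have "((\<lambda>u. D * (a * log q (ln u) + 1) * ln u powr \<theta> / ln u) \<longlongrightarrow> 0) at_top"
    using assms unfolding log_def by real_asymp
  then have "eventually (\<lambda>u. D * (a * log q (ln u) + 1) * ln u powr \<theta> / ln u < \<kappa>) at_top"
    using assms(4) by (rule order_tendstoD)
  moreover have "eventually (\<lambda>u::real. ln u > 0) at_top" by real_asymp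
  ultimately have ev: "eventually (\<lambda>u. D * (a * log q (ln u) + 1) * ln u powr \<theta> \<le> \<kappa> * ln u) at_top"
    by eventually_elim (auto simp: field_simps)
  show ?thesis
    using filterlim_real_sequentially ev by (rule filterlim_iff[THEN iffD1, rule_format])
qed

lemma sumB_summable:
  assumes "0 \<le> x0" "x0 < (1::real)"
  shows "summable (\<lambda>k. real (Suc k) ^ r * x0 ^ k)"
proof (cases "x0 = 0")
  case True
  have "summable (\<lambda>k. real (Suc k) ^ r * x0 ^ k)"
    by (rule summable_finite[of "{0}"]) (auto simp: True)
  then show ?thesis .
next
  case False
  then have x0: "0 < x0" using assms by simp
  have "summable (\<lambda>k. real (Suc k) ^ r * x0 ^ Suc k)"
    using summable_pow_geom[of x0 r] assms by (subst summable_Suc_iff) auto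
  then have "summable (\<lambda>k. real (Suc k) ^ r * x0 ^ Suc k / x0)" by (rule summable_divide)
  then show ?thesis using x0 by simp
qed

lemma prod_exp_bound:
  fixes g :: "'b \<Rightarrow> real"
  assumes "finite Q" "\<And>P. P \<in> Q \<Longrightarrow> g P \<ge> 0" "D \<ge> 0"
  shows "(\<Prod>P\<in>Q. 1 + D * g P) \<le> exp (D * (\<Sum>P\<in>Q. g P))"
proof -
  have "(\<Prod>P\<in>Q. 1 + D * g P) \<le> (\<Prod>P\<in>Q. exp (D * g P))"
    by (intro prod_mono) (use assms in auto)
  also have "\<dots> = exp (D * (\<Sum>P\<in>Q. g P))"
    using assms(1) by (simp add: exp_sum sum_distrib_left)
  finally show ?thesis .
qed

lemma sum_deg_bound:
  fixes Q :: "'a::{finite,field} poly set" and Xd :: nat and \<epsilon> :: real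
  assumes QP: "\<And>P. P \<in> Q \<Longrightarrow> monic_poly P \<and> degree P \<le> Xd"
  shows "(\<Sum>P\<in>Q. (real CARD('a) powr (-\<epsilon>)) ^ degree P)
          \<le> real (Xd + 1) * real CARD('a) powr (real Xd * max 0 (1 - \<epsilon>))"
proof -
  define q where "q = real CARD('a)"
  have q0: "q \<ge> 2" unfolding q_def using card_ge2[where 'a='a] by linarith
  have fQ: "finite Q"
    by (rule finite_subset[OF _ finite_deg_le[of Xd]]) (use QP in auto)
  have "(\<Sum>P\<in>Q. (q powr (-\<epsilon>)) ^ degree P)
        = (\<Sum>n\<in>{..Xd}. \<Sum>P\<in>{P\<in>Q. degree P = n}. (q powr (-\<epsilon>)) ^ degree P)"
    by (rule sum.group[symmetric]) (use fQ QP in auto)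
  also have "\<dots> = (\<Sum>n\<in>{..Xd}. real (card {P\<in>Q. degree P = n}) * (q powr (-\<epsilon>)) ^ n)"
    by (intro sum.cong refl) simp
  also have "\<dots> \<le> (\<Sum>n\<in>{..Xd}. q powr (real Xd * max 0 (1 - \<epsilon>)))"
  proof (intro sum_mono)
    fix n assume n: "n \<in> {..Xd}"
    have "card {P\<in>Q. degree P = n} \<le> card {p::'a poly. monic_poly p \<and> degree p = n}"
    proof (rule card_mono)
      show "finite {p::'a poly. monic_poly p \<and> degree p = n}"
        by (rule finite_subset[OF _ finite_deg_le[of n]]) auto
    qed (use QP in auto)
    also have "\<dots> \<le> CARD('a) ^ n" by (rule card_monic_deg)
    finally have "real (card {P\<in>Q. degree P = n}) \<le> q ^ n" unfolding q_def
      by (metis of_nat_le_iff of_nat_power)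
    then have "real (card {P\<in>Q. degree P = n}) * (q powr (-\<epsilon>)) ^ n \<le> q ^ n * (q powr (-\<epsilon>)) ^ n"
      by (intro mult_right_mono) auto
    also have "\<dots> = q powr (real n * (1 - \<epsilon>))"
    proof -
      have a: "q ^ n = q powr real n" using q0 by (simp add: powr_realpow)
      have b: "(q powr (-\<epsilon>)) ^ n = q powr (real n * (-\<epsilon>))" using q0 by (intro powr_power) simp
      have "q ^ n * (q powr (-\<epsilon>)) ^ n = q powr real n * q powr (real n * (-\<epsilon>))" unfolding a b ..
      also have "\<dots> = q powr (real n * (1 - \<epsilon>))" by (simp add: powr_add[symmetric] algebra_simps)
      finally show ?thesis .
    qed
    also have "\<dots> \<le> q powr (real Xd * max 0 (1 - \<epsilon>))"
    proof (rule powr_mono)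
      have "real n * (1 - \<epsilon>) \<le> real n * max 0 (1 - \<epsilon>)" by (intro mult_left_mono) auto
      also have "\<dots> \<le> real Xd * max 0 (1 - \<epsilon>)" using n by (intro mult_right_mono) auto
      finally show "real n * (1 - \<epsilon>) \<le> real Xd * max 0 (1 - \<epsilon>)" .
    qed (use q0 in auto)
    finally show "real (card {P\<in>Q. degree P = n}) * (q powr (-\<epsilon>)) ^ n \<le> q powr (real Xd * max 0 (1 - \<epsilon>))" .
  qed
  also have "\<dots> = real (Xd + 1) * q powr (real Xd * max 0 (1 - \<epsilon>))" by simp
  finally show ?thesis unfolding q_def .
qed




lemma core:
  fixes \<nu> :: "'a::{finite,field} poly \<Rightarrow> complex" and Q :: "'a poly set"
    and c \<epsilon> C :: real and Y :: nat
  assumes mult: "multiplicative_poly \<nu>" and fQ: "finite Q" and QP: "\<And>P. P \<in> Q \<Longrightarrow> monic_irred P"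
    and eps: "0 < \<epsilon>" "\<epsilon> < c" and C: "C \<ge> 0"
    and pb: "\<And>P k. monic_irred P \<Longrightarrow> k \<ge> 1 \<Longrightarrow> norm (\<nu> (P ^ k)) \<le> C * real k ^ r"
  defines "q \<equiv> real CARD('a)"
  defines "f \<equiv> (\<lambda>P k. \<nu> (P ^ k) / complex_of_real (absq P powr (real k * c)))"
  defines "x0 \<equiv> q powr (-\<epsilon>)"
  defines "B \<equiv> (\<Sum>k. real (Suc k) ^ r * x0 ^ k)"
  shows "(\<forall>P\<in>Q. summable (f P)) \<and>
    norm ((\<Sum>e\<in>{e\<in>PiE Q (\<lambda>_. UNIV). degree (pp Q e) \<le> Y}. \<Prod>P\<in>Q. f P (e P))
          - (\<Prod>P\<in>Q. suminf (f P)))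
    \<le> q powr (-((c-\<epsilon>) * real Y)) * (\<Prod>P\<in>Q. 1 + C * B * x0 ^ degree P)"
proof -
  have q2: "q \<ge> 2" unfolding q_def using card_ge2[where 'a='a] by linarith
  then have q0: "q > 0" "q \<ge> 1" by auto
  have x0: "0 < x0" "x0 < 1" unfolding x0_def using q2 eps
    by (auto intro!: powr_less_one)
  define y where "y P = q powr (- (\<epsilon> * real (degree P)))" for P :: "'a poly"
  define z where "z P = q powr (- ((c - \<epsilon>) * real (degree P)))" for P :: "'a poly"
  define h where "h P k = norm (\<nu> (P ^ k)) * y P ^ k" for P k
  have yx0: "y P = x0 ^ degree P" for P
    unfolding y_def x0_def using q0 by (simp add: powr_power mult.commute)
  have y0: "0 < y P" for P unfolding y_def using q0 by simp
  have z0: "0 < z P" for P unfolding z_def using q0 by simp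
  have z1: "z P \<le> 1" for P
  proof -
    have "z P \<le> q powr 0" unfolding z_def by (rule powr_mono) (use eps q0 in auto)
    then show ?thesis using q0 by simp
  qed
  have yle: "y P \<le> x0" if "P \<in> Q" for P
  proof -
    have "degree P \<ge> 1" using monic_irred_deg[OF QP[OF that]] by simp
    then have "x0 ^ degree P \<le> x0 ^ 1" using x0 by (intro power_decreasing) auto
    then show ?thesis by (simp add: yx0)
  qed
  have y1: "y P < 1" if "P \<in> Q" for P using yle[OF that] x0 by simp
  have nu1: "\<nu> 1 = 1" using mult by (simp add: multiplicative_poly_def)
  have h0: "h P 0 = 1" for P by (simp add: h_def nu1)
  have hnn: "h P k \<ge> 0" for P k unfolding h_def using y0[of P] by simp
  have nf: "norm (f P k) = h P k * z P ^ k" for P k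
  proof -
    have "absq P powr (real k * c) = q powr (real (degree P) * (real k * c))"
      unfolding q_def by (rule absq_powr)
    also have "\<dots> = inverse ((y P * z P) ^ k)"
    proof -
      have "y P * z P = q powr (- (c * real (degree P)))"
        unfolding y_def z_def by (simp add: powr_add[symmetric] algebra_simps)
      then have "(y P * z P) ^ k = q powr (real k * (- (c * real (degree P))))"
        using q0 by (simp add: powr_power)
      then show ?thesis by (simp add: powr_minus[symmetric] algebra_simps)
    qed
    finally have "absq P powr (real k * c) = inverse ((y P * z P) ^ k)" .
    moreover have "absq P powr (real k * c) > 0" unfolding absq_def using q0 q_def by simp
    ultimately show ?thesis
      unfolding f_def h_def using y0[of P] z0[of P]
      by (simp add: norm_divide power_mult_distrib field_simps)
  qed
  have nfh: "norm (f P k) \<le> h P k" for P k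
    unfolding nf using hnn[of P k] z0[of P] z1[of P]
    by (simp add: mult_left_le power_le_one)
  have hle: "h P k \<le> C * (real k ^ r * y P ^ k)" if "P \<in> Q" "k \<ge> 1" for P k
    unfolding h_def using pb[OF QP[OF that(1)] that(2)] y0[of P]
    by (simp add: mult_right_mono mult.assoc)
  have sumh: "summable (h P)" if "P \<in> Q" for P
  proof -
    have "summable (\<lambda>k. C * (real k ^ r * y P ^ k))"
      using summable_pow_geom[of "y P" r] y0[of P] y1[OF that] by (intro summable_mult) auto
    moreover have "eventually (\<lambda>k. norm (h P k) \<le> C * (real k ^ r * y P ^ k)) at_top"
      using eventually_ge_at_top[of 1] by eventually_elim (use hle[OF that] hnn in auto)
    ultimately show ?thesis by (rule summable_comparison_test_ev[rotated])
  qed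
  have sumf: "summable (f P)" "summable (\<lambda>k. norm (f P k))" if "P \<in> Q" for P
  proof -
    show "summable (\<lambda>k. norm (f P k))"
      by (rule summable_comparison_test[OF _ sumh[OF that]]) (use nfh in auto)
    then show "summable (f P)" by (rule summable_norm_cancel)
  qed
  have sumB: "summable (\<lambda>k. real (Suc k) ^ r * x0 ^ k)"
  proof -
    have "summable (\<lambda>k. real (Suc k) ^ r * x0 ^ Suc k)"
      using summable_pow_geom[of x0 r] x0 by (subst summable_Suc_iff) auto
    then have "summable (\<lambda>k. real (Suc k) ^ r * x0 ^ Suc k / x0)" by (rule summable_divide)
    then show ?thesis using x0 by simp
  qed
  have hbound: "suminf (h P) \<le> 1 + C * B * x0 ^ degree P" if "P \<in> Q" for P
  proof -
    have "suminf (\<lambda>k. h P (Suc k)) = suminf (h P) - h P 0"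
      using sumh[OF that] by (rule suminf_split_head)
    then have e: "suminf (h P) = 1 + suminf (\<lambda>k. h P (Suc k))" by (simp add: h0)
    have "h P (Suc k) \<le> C * y P * (real (Suc k) ^ r * x0 ^ k)" for k
    proof -
      have "h P (Suc k) \<le> C * (real (Suc k) ^ r * y P ^ Suc k)" using hle[OF that, of "Suc k"] by simp
      also have "\<dots> = C * y P * (real (Suc k) ^ r * y P ^ k)" by (simp add: algebra_simps)
      also have "\<dots> \<le> C * y P * (real (Suc k) ^ r * x0 ^ k)"
        using C y0[of P] yle[OF that]
        by (intro mult_left_mono power_mono) (auto)
      finally show ?thesis .
    qed
    then have "suminf (\<lambda>k. h P (Suc k)) \<le> suminf (\<lambda>k. C * y P * (real (Suc k) ^ r * x0 ^ k))"
      using sumh[OF that] sumB by (intro suminf_le) (auto simp: summable_Suc_iff intro: summable_mult)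
    also have "\<dots> = C * y P * B" unfolding B_def using sumB by (rule suminf_mult)
    finally show ?thesis using e yx0 by (simp add: algebra_simps)
  qed
  define I where "I = PiE Q (\<lambda>_. UNIV :: nat set)"
  define L where "L = {e\<in>I. degree (pp Q e) \<le> Y}"
  define H where "H = {e\<in>I. \<not> degree (pp Q e) \<le> Y}"
  define F where "F e = (\<Prod>P\<in>Q. f P (e P))" for e
  define G where "G e = (\<Prod>P\<in>Q. h P (e P))" for e
  have IU: "I = L \<union> H" and LH: "L \<inter> H = {}" unfolding L_def H_def by auto
  have Gnn: "G e \<ge> 0" for e unfolding G_def using hnn by (simp add: prod_nonneg)
  have habs: "(\<lambda>k. norm (h P k)) summable_on UNIV" if "P \<in> Q" for P
    using sumh[OF that] hnn by (intro norm_summable_imp_summable_on) simp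
  have fabs: "(\<lambda>k. norm (f P k)) summable_on UNIV" if "P \<in> Q" for P
    using sumf(2)[OF that] by (intro norm_summable_imp_summable_on) simp
  have Gabs_old: "Infinite_Set_Sum.abs_summable_on G I"
    unfolding G_def I_def
    by (rule Infinite_Set_Sum.abs_summable_on_prod_PiE[OF fQ])
       (simp_all add: abs_summable_equivalent[THEN iffD1, OF habs])
  have Gabs: "(\<lambda>e. norm (G e)) summable_on I"
    using Gabs_old abs_summable_equivalent by blast
  have Gsum: "G summable_on I" using Gabs by (rule abs_summable_summable)
  have nFG: "norm (F e) \<le> norm (G e)" for e
  proof -
    have "norm (F e) = (\<Prod>P\<in>Q. norm (f P (e P)))" unfolding F_def by (simp add: prod_norm)
    also have "\<dots> \<le> (\<Prod>P\<in>Q. h P (e P))" by (intro prod_mono) (use nfh in auto)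
    also have "\<dots> \<le> norm (G e)" unfolding G_def by simp
    finally show ?thesis .
  qed
  have Fabs: "(\<lambda>e. norm (F e)) summable_on I"
    by (rule Infinite_Sum.abs_summable_on_comparison_test[OF Gabs]) (use nFG in auto)
  have Fsum: "F summable_on I" using Fabs by (rule abs_summable_summable)
  have suminf_infsum: "infsum g UNIV = suminf g" if "g summable_on (UNIV::nat set)" for g :: "nat \<Rightarrow> 'b::{banach}"
    using that by (metis has_sum_imp_sums has_sum_infsum sums_unique)
  have FI: "infsum F I = (\<Prod>P\<in>Q. suminf (f P))"
  proof -
    have "infsum F I = (\<Prod>P\<in>Q. infsum (f P) UNIV)"
      unfolding F_def I_def by (rule infsum_prod_PiE_abs[OF fQ]) (use fabs in auto)
    also have "\<dots> = (\<Prod>P\<in>Q. suminf (f P))"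
    proof (rule prod.cong[OF refl])
      fix P assume "P \<in> Q"
      then show "infsum (f P) UNIV = suminf (f P)"
        by (rule suminf_infsum[OF abs_summable_summable[OF fabs]])
    qed
    finally show ?thesis .
  qed
  have GI: "infsum G I = (\<Prod>P\<in>Q. suminf (h P))"
  proof -
    have "infsum G I = (\<Prod>P\<in>Q. infsum (h P) UNIV)"
      unfolding G_def I_def by (rule infsum_prod_PiE_abs[OF fQ]) (use habs in auto)
    also have "\<dots> = (\<Prod>P\<in>Q. suminf (h P))"
    proof (rule prod.cong[OF refl])
      fix P assume "P \<in> Q"
      then show "infsum (h P) UNIV = suminf (h P)"
        by (rule suminf_infsum[OF abs_summable_summable[OF habs]])
    qed
    finally show ?thesis .
  qed
  have finL: "finite L"
  proof (rule finite_subset)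
    show "L \<subseteq> PiE Q (\<lambda>_. {..Y})"
    proof
      fix e assume e: "e \<in> L"
      have "e P \<le> Y" if P: "P \<in> Q" for P
      proof -
        have "e P \<le> e P * degree P" using monic_irred_deg[OF QP[OF P]] by simp
        also have "\<dots> \<le> (\<Sum>P\<in>Q. e P * degree P)" by (rule member_le_sum[OF P]) (use fQ in auto)
        also have "\<dots> = degree (pp Q e)" by (rule pp_degree[symmetric, OF fQ QP])
        also have "\<dots> \<le> Y" using e by (simp add: L_def)
        finally show ?thesis .
      qed
      then show "e \<in> PiE Q (\<lambda>_. {..Y})" using e by (auto simp: L_def I_def PiE_def)
    qed
    show "finite (PiE Q (\<lambda>_. {..Y}))" by (rule finite_PiE[OF fQ]) auto
  qed
  have sub: "L \<subseteq> I" "H \<subseteq> I" unfolding L_def H_def by auto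
  have "infsum F I = infsum F L + infsum F H"
    unfolding IU by (rule infsum_Un_disjoint[OF _ _ LH])
      (use summable_on_subset_banach[OF Fsum] sub IU in auto)
  then have eq: "sum F L - (\<Prod>P\<in>Q. suminf (f P)) = - infsum F H"
    using finL FI by simp
  define K where "K = q powr (-((c-\<epsilon>) * real Y))"
  have K0: "K \<ge> 0" unfolding K_def by simp
  have FH: "norm (F e) \<le> K * G e" if e: "e \<in> H" for e
  proof -
    have "norm (F e) = G e * (\<Prod>P\<in>Q. z P ^ e P)"
      unfolding F_def G_def prod_norm[symmetric] nf prod.distrib ..
    also have "(\<Prod>P\<in>Q. z P ^ e P) = q powr (- ((c - \<epsilon>) * real (degree (pp Q e))))"
    proof -
      have "(\<Prod>P\<in>Q. z P ^ e P) = (\<Prod>P\<in>Q. q powr (real (e P) * - ((c - \<epsilon>) * real (degree P))))"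
        unfolding z_def using q0 by (intro prod.cong refl) (simp add: powr_power)
      also have "\<dots> = q powr (\<Sum>P\<in>Q. real (e P) * - ((c - \<epsilon>) * real (degree P)))"
        using q0 by (simp add: powr_sum)
      also have "(\<Sum>P\<in>Q. real (e P) * - ((c - \<epsilon>) * real (degree P))) = - ((c - \<epsilon>) * real (degree (pp Q e)))"
        by (simp add: pp_degree[OF fQ QP] sum_distrib_left sum_negf[symmetric] algebra_simps)
      finally show ?thesis .
    qed
    also have "q powr (- ((c - \<epsilon>) * real (degree (pp Q e)))) \<le> K"
      unfolding K_def using e eps q0 by (intro powr_mono) (auto simp: H_def)
    finally show ?thesis using Gnn[of e] by (metis mult_right_mono mult.commute)
  qed
  have "norm (infsum F H) \<le> infsum (\<lambda>e. norm (F e)) H"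
    by (rule norm_infsum_bound) (use summable_on_subset_banach[OF Fabs sub(2)] in auto)
  also have "\<dots> \<le> infsum (\<lambda>e. K * G e) H"
    by (rule infsum_mono) (use summable_on_subset_banach[OF Fabs sub(2)]
        summable_on_cmult_right[OF summable_on_subset_banach[OF Gsum sub(2)]] FH in auto)
  also have "\<dots> = K * infsum G H" by (rule infsum_cmult_right') 
  also have "infsum G H \<le> infsum G I"
  proof -
    have "infsum G I = infsum G L + infsum G H"
      unfolding IU by (rule infsum_Un_disjoint[OF _ _ LH])
        (use summable_on_subset_banach[OF Gsum] sub IU in auto)
    moreover have "infsum G L \<ge> 0" using Gnn by (simp add: infsum_nonneg)
    ultimately show ?thesis by simp
  qed
  then have "K * infsum G H \<le> K * infsum G I" using K0 by (rule mult_left_mono)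
  also have "infsum G I \<le> (\<Prod>P\<in>Q. 1 + C * B * x0 ^ degree P)"
    unfolding GI by (intro prod_mono) (use hbound hnn in \<open>auto intro: suminf_nonneg sumh\<close>)
  then have "K * infsum G I \<le> K * (\<Prod>P\<in>Q. 1 + C * B * x0 ^ degree P)" using K0 by (rule mult_left_mono)
  finally have "norm (infsum F H) \<le> K * (\<Prod>P\<in>Q. 1 + C * B * x0 ^ degree P)" .
  moreover have "sum F L = (\<Sum>e\<in>{e\<in>PiE Q (\<lambda>_. UNIV). degree (pp Q e) \<le> Y}. \<Prod>P\<in>Q. f P (e P))"
    unfolding L_def I_def F_def ..
  ultimately show ?thesis using eq sumf(1) unfolding K_def by (simp add: norm_minus_cancel)
qed




theorem lemma7p12:
  fixes \<nu> :: "'a::{finite,field} poly \<Rightarrow> complex"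
    and r :: nat and \<eta> a b c \<epsilon> \<delta> :: real
    and X y :: "nat \<Rightarrow> nat"
  assumes mult: "multiplicative_poly \<nu>"
    and prime_powers: "\<exists>C. \<forall>P k. monic_irred P \<longrightarrow> k \<ge> 1 \<longrightarrow>
                          norm (\<nu> (P ^ k)) \<le> C * real k ^ r"
    and eta_pos: "\<eta> > 0"
    and growth: "\<exists>C N. \<forall>A. monic_poly A \<longrightarrow> degree A \<ge> N \<longrightarrow>
                          norm (\<nu> A) \<le> C * absq A powr \<eta>"
    and a_pos: "a > 0" and b_pos: "b > 0"
    and X_mono: "mono X" and y_mono: "mono y"
    and Xy_bounds: "\<exists>N. \<forall>d\<ge>N.
           real (X d) \<le> a * log (real CARD('a)) (ln (real d)) \<and>
           real (y d) \<ge> b * log (real CARD('a)) (real d)"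
    and c_eps: "c > \<epsilon>" and eps_lower: "\<epsilon> > max 0 (1 - 1 / a)" and c_eta: "c > \<eta>"
    and delta: "0 < \<delta>" "\<delta> < 1"
  shows "\<exists>K N. \<forall>(R::'a poly) (S::'a poly). monic_poly R \<longrightarrow> monic_poly S \<longrightarrow> degree R \<ge> N \<longrightarrow>
           norm ((\<Sum>A \<in> {A. smooth_monic (X (degree R)) A \<and> degree A \<le> y (degree R)
                               \<and> coprime A S}.
                    \<nu> A / complex_of_real (absq A powr c))
                 - (\<Prod>P \<in> {P. monic_irred P \<and> degree P \<le> X (degree R) \<and> coprime P S}.
                    1 + (\<Sum>k. \<nu> (P ^ (k + 1)) / complex_of_real (absq P powr (real (k + 1) * c)))))
           \<le> K * real (degree R) powr (- (b * (c - \<epsilon>) * (1 - \<delta>)))"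
proof -
  obtain C0 where C0: "\<forall>P k. monic_irred P \<longrightarrow> k \<ge> 1 \<longrightarrow> norm (\<nu> (P ^ k)) \<le> C0 * real k ^ r"
    using prime_powers by blast
  define C where "C = max C0 0"
  have C: "C \<ge> 0" unfolding C_def by simp
  have pb: "norm (\<nu> (P ^ k)) \<le> C * real k ^ r" if "monic_irred P" "k \<ge> 1" for P k
  proof -
    have "norm (\<nu> (P ^ k)) \<le> C0 * real k ^ r" using C0 that by blast
    also have "\<dots> \<le> C * real k ^ r" unfolding C_def by (intro mult_right_mono) auto
    finally show ?thesis .
  qed
  obtain N0 where N0: "\<forall>d\<ge>N0. real (X d) \<le> a * log (real CARD('a)) (ln (real d)) \<and>
           real (y d) \<ge> b * log (real CARD('a)) (real d)" using Xy_bounds by blast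
  define q where "q = real CARD('a)"
  have q2: "q \<ge> 2" unfolding q_def using card_ge2[where 'a='a] by linarith
  have eps0: "\<epsilon> > 0" using eps_lower by simp
  define x0 where "x0 = q powr (-\<epsilon>)"
  have x0: "0 < x0" "x0 < 1" unfolding x0_def using q2 eps0 by (auto intro!: powr_less_one)
  define B where "B = (\<Sum>k. real (Suc k) ^ r * x0 ^ k)"
  have B0: "B \<ge> 0" unfolding B_def using sumB_summable[of x0 r] x0 by (intro suminf_nonneg) auto
  define m where "m = max 0 (1 - \<epsilon>)"
  define \<theta> where "\<theta> = a * m"
  have th0: "\<theta> \<ge> 0" unfolding \<theta>_def m_def using a_pos by simp
  have th1: "\<theta> < 1"
  proof (cases "1 - \<epsilon> \<le> 0")
    case True then show ?thesis unfolding \<theta>_def m_def by simp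
  next
    case False
    have "1 - 1 / a < \<epsilon>" using eps_lower by simp
    then have "a * (1 - \<epsilon>) < a * (1 / a)" using a_pos by (intro mult_strict_left_mono) auto
    then show ?thesis using False a_pos unfolding \<theta>_def m_def by simp
  qed
  define \<kappa> where "\<kappa> = b * (c - \<epsilon>) * \<delta>"
  have ka: "\<kappa> > 0" unfolding \<kappa>_def using b_pos c_eps delta by simp
  define D where "D = C * B"
  have D0: "D \<ge> 0" unfolding D_def using C B0 by simp
  have "eventually (\<lambda>d::nat. D * (a * log q (ln (real d)) + 1) * ln (real d) powr \<theta> \<le> \<kappa> * ln (real d)) sequentially"
    by (rule asymp_aux) (use q2 th0 th1 ka in auto)
  then obtain N1 where N1: "\<And>d. d \<ge> N1 \<Longrightarrow> D * (a * log q (ln (real d)) + 1) * ln (real d) powr \<theta> \<le> \<kappa> * ln (real d)"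
    by (auto simp: eventually_sequentially)
  show ?thesis
  proof (intro exI[of _ "1::real"] exI[of _ "max (max N0 N1) 3"] allI impI)
    fix R S :: "'a poly"
    assume mR: "monic_poly R" and mS: "monic_poly S" and dR: "max (max N0 N1) 3 \<le> degree R"
    define d where "d = degree R"
    define Xd where "Xd = X d"
    define Y where "Y = y d"
    note defs = d_def Xd_def Y_def
    show "norm ((\<Sum>A \<in> {A. smooth_monic (X (degree R)) A \<and> degree A \<le> y (degree R) \<and> coprime A S}.
                    \<nu> A / complex_of_real (absq A powr c))
                 - (\<Prod>P \<in> {P. monic_irred P \<and> degree P \<le> X (degree R) \<and> coprime P S}.
                    1 + (\<Sum>k. \<nu> (P ^ (k + 1)) / complex_of_real (absq P powr (real (k + 1) * c)))))
           \<le> 1 * real (degree R) powr (- (b * (c - \<epsilon>) * (1 - \<delta>)))"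
    proof -
    have dN: "d \<ge> N0" "d \<ge> N1" "d \<ge> 3" using dR unfolding d_def by auto
    have dpos: "real d > 0" using dN by simp
    have ld: "ln (real d) > 0" using dN by (intro ln_gt_zero) simp
    have XB: "real Xd \<le> a * log q (ln (real d))" and YB: "real Y \<ge> b * log q (real d)"
      using N0 dN unfolding Xd_def Y_def q_def by auto
    define Q where "Q = {P::'a poly. monic_irred P \<and> degree P \<le> Xd \<and> coprime P S}"
    have QP: "\<And>P. P \<in> Q \<Longrightarrow> monic_irred P" unfolding Q_def by auto
    have fQ: "finite Q" by (rule finite_subset[OF _ finite_deg_le[of Xd]]) (auto simp: Q_def)
    define f where "f = (\<lambda>P k. \<nu> (P ^ k) / complex_of_real (absq P powr (real k * c)))"
    define L where "L = {e\<in>PiE Q (\<lambda>_. UNIV). degree (pp Q e) \<le> Y}"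
    define Aset where "Aset = {A. smooth_monic Xd A \<and> degree A \<le> Y \<and> coprime A S}"
    have core': "(\<forall>P\<in>Q. summable (f P)) \<and>
      norm ((\<Sum>e\<in>L. \<Prod>P\<in>Q. f P (e P)) - (\<Prod>P\<in>Q. suminf (f P)))
      \<le> q powr (-((c-\<epsilon>) * real Y)) * (\<Prod>P\<in>Q. 1 + C * B * x0 ^ degree P)"
      unfolding f_def L_def q_def x0_def B_def
      by (rule core[OF mult fQ QP eps0 c_eps C pb]) (auto simp: q_def)
    have Qcop: "\<not> P dvd S" if "P \<in> Q" for P
    proof
      assume "P dvd S"
      moreover have "coprime P S" using that by (simp add: Q_def)
      ultimately have "is_unit P" using coprime_common_divisor[of P S P] by simp
      then show False using QP[OF that] by (simp add: monic_irred_def irreducible_not_unit)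
    qed
    have bij: "bij_betw (pp Q) L Aset"
    proof (rule bij_betw_imageI)
      show "inj_on (pp Q) L" by (rule inj_on_subset[OF pp_inj[OF fQ QP]]) (auto simp: L_def)
      show "pp Q ` L = Aset"
      proof
        show "pp Q ` L \<subseteq> Aset"
        proof
          fix A assume "A \<in> pp Q ` L"
          then obtain e where e: "e \<in> L" "A = pp Q e" by blast
          have m: "monic_poly A" using e pp_monic[OF fQ QP] by simp
          have inQ: "P \<in> Q" if "monic_irred P" "P dvd A" for P
            using pp_dvd[OF fQ QP that(1)] that(2) e by simp
          have "smooth_monic Xd A" unfolding smooth_monic_def using m inQ by (auto simp: Q_def)
          moreover have "degree A \<le> Y" using e by (simp add: L_def)
          moreover have "coprime A S"
            using pp_nz[OF fQ QP] e inQ Qcop by (subst coprime_iff_monic_irred) auto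
          ultimately show "A \<in> Aset" by (simp add: Aset_def)
        qed
        show "Aset \<subseteq> pp Q ` L"
        proof
          fix A assume A: "A \<in> Aset"
          then have m: "monic_poly A" and sm: "smooth_monic Xd A" and dA: "degree A \<le> Y"
            and cA: "coprime A S" by (auto simp: Aset_def smooth_monic_def)
          have A0: "A \<noteq> 0" using m by (auto simp: monic_poly_def)
          have "P \<in> Q" if P: "monic_irred P" "P dvd A" for P
          proof -
            have "degree P \<le> Xd" using sm P by (auto simp: smooth_monic_def)
            moreover have "coprime P S"
            proof (subst coprime_iff_monic_irred)
              show "P \<noteq> 0" using monic_irred_nz[OF P(1)] .
              show "\<forall>R. monic_irred R \<and> R dvd P \<longrightarrow> \<not> R dvd S"
              proof (intro allI impI)
                fix R assume R: "monic_irred R \<and> R dvd P"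
                then have "R = P" using monic_irred_dvd_eq P by blast
                then show "\<not> R dvd S" using cA A0 P by (subst (asm) coprime_iff_monic_irred) auto
              qed
            qed
            ultimately show ?thesis using P by (simp add: Q_def)
          qed
          then obtain e where e: "e \<in> PiE Q (\<lambda>_. UNIV)" "A = pp Q e"
            using pp_surj[OF fQ QP m] by blast
          then have "e \<in> L" using dA by (simp add: L_def)
          then show "A \<in> pp Q ` L" using e by blast
        qed
      qed
    qed
    have pw: "\<nu> (pp Q e) / complex_of_real (absq (pp Q e) powr c) = (\<Prod>P\<in>Q. f P (e P))" for e
    proof -
      have "absq (pp Q e) powr c = q powr (real (degree (pp Q e)) * c)"
        unfolding q_def by (rule absq_powr)
      also have "\<dots> = q powr (\<Sum>P\<in>Q. real (degree P) * (real (e P) * c))"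
        by (simp add: pp_degree[OF fQ QP] sum_distrib_left sum_distrib_right algebra_simps)
      also have "\<dots> = (\<Prod>P\<in>Q. q powr (real (degree P) * (real (e P) * c)))"
        using q2 by (simp add: powr_sum)
      also have "\<dots> = (\<Prod>P\<in>Q. absq P powr (real (e P) * c))"
        unfolding q_def by (simp add: absq_powr)
      finally have "absq (pp Q e) powr c = (\<Prod>P\<in>Q. absq P powr (real (e P) * c))" .
      then show ?thesis
        unfolding f_def using pp_mult[OF mult fQ QP, of e] by (simp add: prod_dividef)
    qed
    have sumeq: "(\<Sum>A\<in>Aset. \<nu> A / complex_of_real (absq A powr c)) = (\<Sum>e\<in>L. \<Prod>P\<in>Q. f P (e P))"
      using sum.reindex_bij_betw[OF bij, of "\<lambda>A. \<nu> A / complex_of_real (absq A powr c)"] pw by simp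
    have prodeq: "1 + (\<Sum>k. \<nu> (P ^ (k + 1)) / complex_of_real (absq P powr (real (k + 1) * c))) = suminf (f P)"
      if "P \<in> Q" for P
    proof -
      have "(\<Sum>k. f P (Suc k)) = suminf (f P) - f P 0"
        using core' that by (intro suminf_split_head) auto
      moreover have "f P 0 = 1" unfolding f_def using mult q2 by (simp add: multiplicative_poly_def absq_def q_def)
      ultimately show ?thesis unfolding f_def by simp
    qed
    have setA: "{A. smooth_monic (X (degree R)) A \<and> degree A \<le> y (degree R) \<and> coprime A S} = Aset"
      unfolding Aset_def Xd_def Y_def d_def ..
    have setQ: "{P. monic_irred P \<and> degree P \<le> X (degree R) \<and> coprime P S} = Q"
      unfolding Q_def Xd_def d_def ..
    have prodeq': "(\<Prod>P\<in>Q. 1 + (\<Sum>k. \<nu> (P ^ (k + 1)) / complex_of_real (absq P powr (real (k + 1) * c))))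
        = (\<Prod>P\<in>Q. suminf (f P))" by (rule prod.cong[OF refl]) (rule prodeq)
    define K1 where "K1 = q powr (-((c-\<epsilon>) * real Y))"
    have K1: "K1 \<ge> 0" unfolding K1_def by simp
    have mainb: "norm ((\<Sum>e\<in>L. \<Prod>P\<in>Q. f P (e P)) - (\<Prod>P\<in>Q. suminf (f P)))
      \<le> K1 * (\<Prod>P\<in>Q. 1 + C * B * x0 ^ degree P)" using core' unfolding K1_def by blast
    have Pb: "(\<Prod>P\<in>Q. 1 + C * B * x0 ^ degree P) \<le> exp (D * (\<Sum>P\<in>Q. x0 ^ degree P))"
      using prod_exp_bound[OF fQ, of "\<lambda>P. x0 ^ degree P" D] x0 D0 unfolding D_def
      by (simp add: mult.assoc)
    have Sb: "(\<Sum>P\<in>Q. x0 ^ degree P) \<le> real (Xd + 1) * q powr (real Xd * m)"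
      unfolding x0_def q_def m_def
      by (rule sum_deg_bound) (auto simp: Q_def monic_irred_def)
    have lqp: "q powr (real Xd) \<le> ln (real d) powr a"
    proof -
      have "q powr (real Xd) \<le> q powr (a * log q (ln (real d)))"
        by (rule powr_mono) (use XB q2 in auto)
      also have "\<dots> = (q powr (log q (ln (real d)))) powr a" by (simp add: powr_powr mult.commute)
      also have "\<dots> = ln (real d) powr a" using q2 ld by simp
      finally show ?thesis .
    qed
    have Tb: "real (Xd + 1) * q powr (real Xd * m) \<le> (a * log q (ln (real d)) + 1) * ln (real d) powr \<theta>"
    proof (rule mult_mono)
      show "real (Xd + 1) \<le> a * log q (ln (real d)) + 1" using XB by simp
      have "q powr (real Xd * m) = (q powr real Xd) powr m" by (simp add: powr_powr)
      also have "\<dots> \<le> (ln (real d) powr a) powr m"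
        by (rule powr_mono2) (use lqp in \<open>auto simp: m_def\<close>)
      also have "\<dots> = ln (real d) powr \<theta>" by (simp add: powr_powr \<theta>_def)
      finally show "q powr (real Xd * m) \<le> ln (real d) powr \<theta>" .
    qed (use XB in auto)
    have Eb: "exp (D * (\<Sum>P\<in>Q. x0 ^ degree P)) \<le> real d powr \<kappa>"
    proof -
      have "D * (\<Sum>P\<in>Q. x0 ^ degree P) \<le> D * ((a * log q (ln (real d)) + 1) * ln (real d) powr \<theta>)"
        using Sb Tb D0 by (intro mult_left_mono) auto
      also have "\<dots> \<le> \<kappa> * ln (real d)" using N1[OF dN(2)] by (simp add: mult.assoc)
      finally have "exp (D * (\<Sum>P\<in>Q. x0 ^ degree P)) \<le> exp (\<kappa> * ln (real d))" by simp
      also have "\<dots> = real d powr \<kappa>" using dpos by (simp add: powr_def)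
      finally show ?thesis .
    qed
    have Kb: "K1 \<le> real d powr (- (b * (c - \<epsilon>)))"
    proof -
      have "K1 \<le> q powr (-((c - \<epsilon>) * (b * log q (real d))))"
        unfolding K1_def by (rule powr_mono) (use YB c_eps q2 in \<open>auto intro: mult_left_mono\<close>)
      also have "\<dots> = (q powr (log q (real d))) powr (- (b * (c - \<epsilon>)))"
        by (simp add: powr_powr algebra_simps)
      also have "\<dots> = real d powr (- (b * (c - \<epsilon>)))" using q2 dpos by simp
      finally show ?thesis .
    qed
    have Pnn: "(\<Prod>P\<in>Q. 1 + C * B * x0 ^ degree P) \<ge> 0"
      using C B0 x0 by (intro prod_nonneg) auto
    have "norm ((\<Sum>e\<in>L. \<Prod>P\<in>Q. f P (e P)) - (\<Prod>P\<in>Q. suminf (f P)))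
          \<le> real d powr (- (b * (c - \<epsilon>))) * real d powr \<kappa>"
    proof -
      have "K1 * (\<Prod>P\<in>Q. 1 + C * B * x0 ^ degree P) \<le> real d powr (- (b * (c - \<epsilon>))) * real d powr \<kappa>"
        by (rule mult_mono) (use Kb Pb Eb Pnn in auto)
      then show ?thesis using mainb by linarith
    qed
    also have "\<dots> = real d powr (- (b * (c - \<epsilon>) * (1 - \<delta>)))"
      by (simp add: powr_add[symmetric] \<kappa>_def algebra_simps)
    finally show ?thesis
      unfolding setA setQ prodeq' sumeq d_def by simp
    qed
  qed
qed


end
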